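(* Let $\delta>0$ with $2\delta<\frac1\delta-1$ and $\delta<\frac14$, let $T_\delta$ be as in the context, let $\phi_\delta(x)=\int_1^x\int_1^y\frac{1}{T_\delta(z)}\,dz\,dy$ and $\phi(x)=x(\log x-1)+1$ (with $\phi(0)=1$). Then: (P1) $\phi_\delta''=\frac{1}{T_\delta}$ and $\phi_\delta(1)=\phi_\delta'(1)=0$; (P2) $\phi_\delta(x)\to\phi(x)$ as $\delta\to0$ for every $x\ge0$; (P3) $\phi_\delta(x)\ge0$ for all $x\in\mathbb{R}$; (P4) $\phi_\delta(x)\le\phi(x)+\frac{\delta}{2(1-\delta)}x^2+3$ for all $x\ge0$; (P5) $\phi_\delta(x)\to\infty$ as $\delta\to0$ for every $x<0$.
   Context: For each admissible $\delta$, $T_\delta:\mathbb{R}\to\mathbb{R}$ is a smooth nondecreasing function with $T_\delta(u)=\delta$ for $u\le\delta$, $T_\delta(u)=u$ for $u\in[2\delta,\frac1\delta-1]$, $T_\delta(u)=\frac1\delta$ for $u\ge\frac1\delta$, and a smooth monotone interpolation on $[\delta,2\delta]$ and on $[\frac1\delta-1,\frac1\delta]$. *)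

theory Defs
  imports "HOL-Analysis.Analysis"
begin

definition smooth_real :: "(real \<Rightarrow> real) \<Rightarrow> bool" where
  "smooth_real f \<longleftrightarrow> (\<forall>n. ((deriv ^^ n) f) differentiable_on UNIV)"

definition oint :: "real \<Rightarrow> real \<Rightarrow> (real \<Rightarrow> real) \<Rightarrow> real" where
  "oint a b f = (if a \<le> b then integral {a..b} f else - integral {b..a} f)"

definition admissible :: "real \<Rightarrow> bool" where
  "admissible d \<longleftrightarrow> d > 0 \<and> 2 * d < 1 / d - 1 \<and> d < 1/4"

definition is_T :: "real \<Rightarrow> (real \<Rightarrow> real) \<Rightarrow> bool" where
  "is_T d T \<longleftrightarrow> smooth_real T \<and> mono T
     \<and> (\<forall>u. u \<le> d \<longrightarrow> T u = d)
     \<and> (\<forall>u. 2 * d \<le> u \<and> u \<le> 1 / d - 1 \<longrightarrow> T u = u)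
     \<and> (\<forall>u. u \<ge> 1 / d \<longrightarrow> T u = 1 / d)"

definition psi_d :: "(real \<Rightarrow> real) \<Rightarrow> real \<Rightarrow> real" where
  "psi_d T y = oint 1 y (\<lambda>z. 1 / T z)"

definition phi_d :: "(real \<Rightarrow> real) \<Rightarrow> real \<Rightarrow> real" where
  "phi_d T x = oint 1 x (\<lambda>y. oint 1 y (\<lambda>z. 1 / T z))"

definition phi :: "real \<Rightarrow> real" where
  "phi x = (if x = 0 then 1 else x * (ln x - 1) + 1)"

end

theory Submission imports Defs "HOL-Real_Asymp.Real_Asymp" begin

lemma oint_split:
  assumes f: "continuous_on UNIV f" and "c \<le> a" "c \<le> x"
  shows "oint a x f = integral {c..x} f - integral {c..a} f"
proof (cases "a \<le> x")
  case True
  have "integral {c..a} f + integral {a..x} f = integral {c..x} f"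
    by (rule Henstock_Kurzweil_Integration.integral_combine) (use True assms in \<open>auto intro: integrable_continuous_interval continuous_on_subset[OF f]\<close>)
  then show ?thesis using True by (simp add: oint_def)
next
  case False
  have "integral {c..x} f + integral {x..a} f = integral {c..a} f"
    by (rule Henstock_Kurzweil_Integration.integral_combine) (use False assms in \<open>auto intro: integrable_continuous_interval continuous_on_subset[OF f]\<close>)
  then show ?thesis using False by (simp add: oint_def)
qed

lemma oint_deriv:
  assumes f: "continuous_on UNIV f"
  shows "((\<lambda>x. oint a x f) has_real_derivative f x) (at x)"
proof -
  define c where "c = min a x - 1"
  define b where "b = x + 1"
  have "((\<lambda>y. integral {c..y} f) has_real_derivative f x) (at x within {c..b})"
    by (rule integral_has_real_derivative) (auto simp: c_def b_def intro: continuous_on_subset[OF f])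
  then have "((\<lambda>y. integral {c..y} f) has_real_derivative f x) (at x within {c<..<b})"
    by (rule has_field_derivative_subset) auto
  then have "((\<lambda>y. integral {c..y} f) has_real_derivative f x) (at x)"
    using at_within_open[of x "{c<..<b}"] by (simp add: c_def b_def)
  then have d: "((\<lambda>y. integral {c..y} f - integral {c..a} f) has_real_derivative f x) (at x)"
    by (auto intro!: derivative_eq_intros)
  show ?thesis
    by (rule has_field_derivative_transform_within_open[OF d, of "{c<..}"])
       (use oint_split[OF f, of c] in \<open>auto simp: c_def\<close>)
qed

lemma oint_same[simp]: "oint a a f = 0"
  by (simp add: oint_def)


lemma phi_deriv:
  assumes "x > 0" shows "(phi has_real_derivative ln x) (at x)"
proof -
  have "((\<lambda>x. x * (ln x - 1) + 1) has_real_derivative ln x) (at x)"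
    using assms by (auto intro!: derivative_eq_intros)
  then show ?thesis
    by (rule has_field_derivative_transform_within_open[of _ _ _ "{0<..}"]) (use assms in \<open>auto simp: phi_def\<close>)
qed

lemma phi_nonneg:
  assumes "x \<ge> 0" shows "phi x \<ge> 0"
proof (cases "x = 0")
  case True then show ?thesis by (simp add: phi_def)
next
  case False
  then have xp: "x > 0" using assms by simp
  have "ln (1/x) \<le> 1/x - 1" by (rule ln_le_minus_one) (use xp in simp)
  then have "- ln x \<le> 1/x - 1" using xp by (simp add: ln_div)
  then have "x * (- ln x) \<le> x * (1/x - 1)" using xp by (intro mult_left_mono) auto
  then show ?thesis using xp False by (simp add: phi_def algebra_simps)
qed

lemma const_on:
  fixes f :: "real \<Rightarrow> real"
  assumes "a \<le> b" "\<And>x. a \<le> x \<Longrightarrow> x \<le> b \<Longrightarrow> (f has_real_derivative 0) (at x)"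
  shows "f a = f b"
proof -
  have "f a \<le> f b" by (rule DERIV_nonneg_imp_nondecreasing[OF assms(1)]) (use assms(2) in blast)
  moreover have "f a \<ge> f b" by (rule DERIV_nonpos_imp_nonincreasing[OF assms(1)]) (use assms(2) in blast)
  ultimately show ?thesis by simp
qed

context
  fixes d :: real and T :: "real \<Rightarrow> real"
  assumes adm: "admissible d" and hT: "is_T d T"
begin

lemma d_pos: "0 < d" and d_lt: "d < 1/4"
  using adm by (auto simp: admissible_def)

lemma T_low: "u \<le> d \<Longrightarrow> T u = d" and T_mid: "2 * d \<le> u \<Longrightarrow> u \<le> 1/d - 1 \<Longrightarrow> T u = u"
  and T_high: "u \<ge> 1/d \<Longrightarrow> T u = 1/d" and T_mono: "mono T"
  using hT by (auto simp: is_T_def)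

lemma T_ge: "d \<le> T u"
proof (cases "u \<le> d")
  case True then show ?thesis using T_low by simp
next
  case False
  then have "T d \<le> T u" using T_mono by (simp add: mono_def)
  then show ?thesis using T_low[of d] by simp
qed

lemma T_pos: "0 < T u" using T_ge[of u] d_pos by simp

lemma T_cont: "continuous_on UNIV T"
proof -
  have "((deriv ^^ 0) T) differentiable_on UNIV" using hT by (simp only: is_T_def smooth_real_def)
  then show ?thesis by (simp add: differentiable_imp_continuous_on)
qed

lemma invT_cont: "continuous_on UNIV (\<lambda>z. 1 / T z)"
  using T_cont T_pos by (auto intro!: continuous_intros simp: less_irrefl) (metis less_irrefl)

lemma psi_deriv: "(psi_d T has_real_derivative 1 / T x) (at x)"
  unfolding psi_d_def[abs_def] by (rule oint_deriv[OF invT_cont])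

lemma psi_cont: "continuous_on UNIV (psi_d T)"
  by (meson DERIV_isCont continuous_at_imp_continuous_on psi_deriv)

lemma phi_d_deriv: "(phi_d T has_real_derivative psi_d T x) (at x)"
proof -
  have e: "psi_d T = (\<lambda>y. oint 1 y (\<lambda>z. 1/T z))" by (rule ext) (simp add: psi_d_def)
  have "phi_d T = (\<lambda>x. oint 1 x (psi_d T))" by (rule ext) (simp add: phi_d_def e)
  then show ?thesis using oint_deriv[OF psi_cont] by simp
qed

lemma psi1: "psi_d T 1 = 0" and phi1: "phi_d T 1 = 0"
  by (simp_all add: psi_d_def phi_d_def)

lemma M_facts: "2 * d < 1" "1 < 1/d - 1" "2 * d < 1/d - 1"
proof -
  have "d * (d*2) \<le> d * (1/2)" using d_pos d_lt by (intro mult_left_mono) auto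
  then have h2: "d + d*(d*2) < 1" using d_lt by linarith
  then show "2 * d < 1" "1 < 1/d - 1" "2 * d < 1/d - 1"
    using d_pos d_lt by (auto simp: field_simps)
qed

lemma psi_mono: "x \<le> y \<Longrightarrow> psi_d T x \<le> psi_d T y"
  by (rule DERIV_nonneg_imp_nondecreasing[where f="psi_d T"])
    (use psi_deriv T_pos in \<open>auto intro!: exI[of _ "1 / T _"] less_imp_le\<close>)

lemma psi_ln: assumes "2 * d \<le> y" "y \<le> 1/d - 1" shows "psi_d T y = ln y"
proof -
  have y0: "y > 0" using assms d_pos by simp
  have D: "((\<lambda>y. psi_d T y - ln y) has_real_derivative 0) (at z)" if "2*d \<le> z" "z \<le> 1/d - 1" for z
  proof -
    have "z > 0" using that d_pos by simp
    then have "((\<lambda>y. psi_d T y - ln y) has_real_derivative 1 / T z - 1 / z) (at z)"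
      by (auto intro!: derivative_eq_intros psi_deriv)
    then show ?thesis using T_mid[OF that] by simp
  qed
  have "psi_d T 1 - ln 1 = psi_d T y - ln y"
  proof (cases "1 \<le> y")
    case True
    show ?thesis by (rule const_on[OF True]) (use D M_facts assms in auto)
  next
    case False
    show ?thesis by (rule const_on[OF _ D, symmetric]) (use D M_facts assms False in auto)
  qed
  then show ?thesis using psi1 by simp
qed

lemma phi_eq: assumes "2 * d \<le> y" "y \<le> 1/d - 1" shows "phi_d T y = phi y"
proof -
  have D: "((\<lambda>y. phi_d T y - phi y) has_real_derivative 0) (at z)" if "2*d \<le> z" "z \<le> 1/d - 1" for z
  proof -
    have "z > 0" using that d_pos by simp
    then have "((\<lambda>y. phi_d T y - phi y) has_real_derivative psi_d T z - ln z) (at z)"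
      by (auto intro!: derivative_eq_intros phi_d_deriv phi_deriv)
    then show ?thesis using psi_ln[OF that] by simp
  qed
  have "phi_d T 1 - phi 1 = phi_d T y - phi y"
  proof (cases "1 \<le> y")
    case True
    show ?thesis by (rule const_on[OF True]) (use D M_facts assms in auto)
  next
    case False
    show ?thesis by (rule const_on[OF _ D, symmetric]) (use D M_facts assms False in auto)
  qed
  then show ?thesis using phi1 by (simp add: phi_def)
qed


lemma psi_le: "y \<le> 2 * d \<Longrightarrow> psi_d T y \<le> ln (2 * d)"
  using psi_mono[of y "2*d"] psi_ln[of "2*d"] M_facts by simp

lemma psi_ge: assumes "0 \<le> y" "y \<le> 2 * d" shows "ln (2 * d) - 2 \<le> psi_d T y"
proof -
  have "(\<lambda>y. psi_d T y - y / d) (2*d) \<le> (\<lambda>y. psi_d T y - y / d) y"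
  proof (rule DERIV_nonpos_imp_nonincreasing[OF assms(2)])
    fix z assume "y \<le> z" "z \<le> 2 * d"
    have "((\<lambda>y. psi_d T y - y / d) has_real_derivative 1 / T z - 1 / d) (at z)"
      using d_pos by (auto intro!: derivative_eq_intros psi_deriv)
    moreover have "1 / T z \<le> 1 / d" using T_ge[of z] d_pos by (simp add: frac_le)
    ultimately show "\<exists>D. ((\<lambda>y. psi_d T y - y / d) has_real_derivative D) (at z) \<and> D \<le> 0"
      by (intro exI[of _ "1 / T z - 1 / d"]) auto
  qed
  then have "ln (2*d) - 2 \<le> psi_d T y - y / d" using psi_ln[of "2*d"] M_facts d_pos by simp
  moreover have "y / d \<ge> 0" using assms d_pos by simp
  ultimately show ?thesis by linarith
qed

lemma ln2d_neg: "ln (2 * d) < 0" using M_facts d_pos by simp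

lemma phi_small_upper: assumes "0 \<le> x" "x \<le> 2 * d" shows "phi_d T x \<le> 1 + 2 * d"
proof -
  have "(\<lambda>y. phi_d T y - y * (ln (2*d) - 2)) x \<le> (\<lambda>y. phi_d T y - y * (ln (2*d) - 2)) (2*d)"
  proof (rule DERIV_nonneg_imp_nondecreasing[OF assms(2)])
    fix z assume z: "x \<le> z" "z \<le> 2 * d"
    have "((\<lambda>y. phi_d T y - y * (ln (2*d) - 2)) has_real_derivative psi_d T z - (ln (2*d) - 2)) (at z)"
      by (auto intro!: derivative_eq_intros phi_d_deriv)
    moreover have "psi_d T z \<ge> ln (2*d) - 2" using psi_ge[of z] z assms by simp
    ultimately show "\<exists>D. ((\<lambda>y. phi_d T y - y * (ln (2*d) - 2)) has_real_derivative D) (at z) \<and> D \<ge> 0"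
      by (intro exI[of _ "psi_d T z - (ln (2*d) - 2)"]) auto
  qed
  then have "phi_d T x \<le> phi (2*d) - 2*d * (ln (2*d) - 2) + x * (ln (2*d) - 2)"
    using phi_eq[of "2*d"] M_facts by simp
  also have "\<dots> = 1 + 2*d + x * ln (2*d) - 2 * x" using d_pos by (simp add: phi_def algebra_simps)
  also have "\<dots> \<le> 1 + 2 * d"
  proof -
    have "x * ln (2*d) \<le> 0" using ln2d_neg assms by (simp add: mult_nonneg_nonpos)
    then show ?thesis using assms by linarith
  qed
  finally show ?thesis .
qed

lemma phi_small_lower: assumes "x \<le> 2 * d" shows "1 - 2 * d + x * ln (2 * d) \<le> phi_d T x"
proof -
  have "(\<lambda>y. phi_d T y - y * ln (2*d)) (2*d) \<le> (\<lambda>y. phi_d T y - y * ln (2*d)) x"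
  proof (rule DERIV_nonpos_imp_nonincreasing[OF assms])
    fix z assume z: "x \<le> z" "z \<le> 2 * d"
    have "((\<lambda>y. phi_d T y - y * ln (2*d)) has_real_derivative psi_d T z - ln (2*d)) (at z)"
      by (auto intro!: derivative_eq_intros phi_d_deriv)
    moreover have "psi_d T z \<le> ln (2*d)" using psi_le z by simp
    ultimately show "\<exists>D. ((\<lambda>y. phi_d T y - y * ln (2*d)) has_real_derivative D) (at z) \<and> D \<le> 0"
      by (intro exI[of _ "psi_d T z - ln (2*d)"]) auto
  qed
  then have "phi (2*d) - 2*d * ln (2*d) \<le> phi_d T x - x * ln (2*d)"
    using phi_eq[of "2*d"] M_facts by simp
  moreover have "phi (2*d) - 2*d * ln (2*d) = 1 - 2 * d" using d_pos by (simp add: phi_def algebra_simps)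
  ultimately show ?thesis by linarith
qed

lemma phi_d_nonneg: "phi_d T x \<ge> 0"
proof (cases "x \<le> 1")
  case True
  have "phi_d T 1 \<le> phi_d T x"
  proof (rule DERIV_nonpos_imp_nonincreasing[OF True])
    fix z assume z: "x \<le> z" "z \<le> 1"
    have "psi_d T z \<le> 0" using psi_mono[OF z(2)] psi1 by simp
    then show "\<exists>D. (phi_d T has_real_derivative D) (at z) \<and> D \<le> 0"
      using phi_d_deriv by blast
  qed
  then show ?thesis using phi1 by simp
next
  case False
  then have F: "1 \<le> x" by simp
  have "phi_d T 1 \<le> phi_d T x"
  proof (rule DERIV_nonneg_imp_nondecreasing[OF F])
    fix z assume z: "1 \<le> z" "z \<le> x"
    have "psi_d T z \<ge> 0" using psi_mono[OF z(1)] psi1 by simp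
    then show "\<exists>D. (phi_d T has_real_derivative D) (at z) \<and> D \<ge> 0"
      using phi_d_deriv by blast
  qed
  then show ?thesis using phi1 by simp
qed

lemma phi_large: assumes "1/d - 1 \<le> x" shows "phi_d T x \<le> phi x + d / (2 * (1 - d)) * x ^ 2"
proof -
  define M where "M = 1/d - 1"
  have M0: "M > 0" using M_facts by (simp add: M_def)
  have TM: "T M = M" using T_mid M_facts by (simp add: M_def)
  have pM: "psi_d T M = ln M" using psi_ln M_facts by (simp add: M_def)
  have fM: "phi_d T M = phi M" using phi_eq M_facts by (simp add: M_def)
  define h where "h = (\<lambda>y. ln y + (y - M) / M - psi_d T y)"
  have hD: "(h has_real_derivative 1 / z + 1 / M - 1 / T z) (at z)" if "z > 0" for z
    unfolding h_def using that M0 by (auto intro!: derivative_eq_intros psi_deriv)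
  have hpos: "h y \<ge> 0" if "M \<le> y" for y
  proof -
    have "h M \<le> h y"
    proof (rule DERIV_nonneg_imp_nondecreasing[OF that])
      fix z assume z: "M \<le> z" "z \<le> y"
      have "T M \<le> T z" using T_mono z by (simp add: mono_def)
      then have "1 / T z \<le> 1 / M" using TM M0 by (simp add: frac_le)
      moreover have "1 / z > 0" using z M0 by simp
      ultimately have "1 / z + 1 / M - 1 / T z \<ge> 0" by linarith
      then show "\<exists>D. (h has_real_derivative D) (at z) \<and> D \<ge> 0"
        using hD[of z] z M0 by force
    qed
    then show ?thesis using pM by (simp add: h_def)
  qed
  define g where "g = (\<lambda>y. phi y + (y - M)^2 / (2 * M) - phi_d T y)"
  have "g M \<le> g x"
  proof (rule DERIV_nonneg_imp_nondecreasing[of M x g])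
    show "M \<le> x" using assms by (simp add: M_def)
    fix z assume z: "M \<le> z" "z \<le> x"
    have "(g has_real_derivative ln z + 2 * (z - M) / (2 * M) - psi_d T z) (at z)"
      unfolding g_def using z M0
      by (auto intro!: derivative_eq_intros phi_deriv phi_d_deriv simp: power2_eq_square field_simps)
    moreover have "ln z + 2 * (z - M) / (2 * M) - psi_d T z = h z" using M0 by (simp add: h_def field_simps)
    ultimately show "\<exists>D. (g has_real_derivative D) (at z) \<and> D \<ge> 0"
      using hpos[OF z(1)] by auto
  qed
  then have "phi_d T x \<le> phi x + (x - M)^2 / (2 * M)" using fM by (simp add: g_def)
  also have "(x - M)^2 / (2 * M) = d / (2 * (1 - d)) * (x - M)^2"
    using d_pos d_lt by (simp add: M_def field_simps)
  also have "\<dots> \<le> d / (2 * (1 - d)) * x^2"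
  proof (rule mult_left_mono)
    have "0 \<le> x - M" "x - M \<le> x" using assms M0 by (auto simp: M_def)
    then show "(x - M)^2 \<le> x^2" by (intro power_mono) auto
    show "0 \<le> d / (2 * (1 - d))" using d_pos d_lt by simp
  qed
  finally show ?thesis by simp
qed

end


lemma adm_intro: assumes "0 < d" "d < 1/4" shows "admissible (d::real)"
proof -
  have "d * (d*2) \<le> d * (1/2)" using assms by (intro mult_left_mono) auto
  then have h2: "d + d*(d*2) < 1" using assms by linarith
  then show ?thesis using assms by (auto simp: admissible_def field_simps)
qed

lemma ev_adm: "\<forall>\<^sub>F d in at_right 0. 0 < d \<and> d < (1/4::real)"
  unfolding eventually_at_right_field by (intro exI[of _ "1/4"]) auto

lemma lim_neg: assumes "(x::real) < 0" shows "filterlim (\<lambda>d. x * ln (2 * d)) at_top (at_right 0)"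
  using assms by real_asymp

theorem lemma2p1:
  fixes T :: "real \<Rightarrow> real \<Rightarrow> real"
  assumes hT: "\<And>d. admissible d \<Longrightarrow> is_T d (T d)"
  shows "(\<forall>d. admissible d \<longrightarrow>
            (\<forall>x. (phi_d (T d) has_real_derivative psi_d (T d) x) (at x)
                 \<and> (psi_d (T d) has_real_derivative 1 / T d x) (at x))
            \<and> phi_d (T d) 1 = 0 \<and> psi_d (T d) 1 = 0)
       \<and> (\<forall>x\<ge>0. ((\<lambda>d. phi_d (T d) x) \<longlongrightarrow> phi x) (at_right 0))
       \<and> (\<forall>d. admissible d \<longrightarrow> (\<forall>x. phi_d (T d) x \<ge> 0))
       \<and> (\<forall>d. admissible d \<longrightarrow> (\<forall>x\<ge>0.
              phi_d (T d) x \<le> phi x + d / (2 * (1 - d)) * x ^ 2 + 3))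
       \<and> (\<forall>x<0. filterlim (\<lambda>d. phi_d (T d) x) at_top (at_right 0))"
proof (intro conjI allI impI)
  fix d assume a: "admissible d"
  note h = hT[OF a]
  fix x
  show "(phi_d (T d) has_real_derivative psi_d (T d) x) (at x)" by (rule phi_d_deriv[OF a h])
  show "(psi_d (T d) has_real_derivative 1 / T d x) (at x)" by (rule psi_deriv[OF a h])
next
  fix d assume a: "admissible d"
  show "phi_d (T d) 1 = 0" "psi_d (T d) 1 = 0" using phi1[OF a hT[OF a]] psi1[OF a hT[OF a]] by auto
next
  fix d x assume a: "admissible d"
  show "phi_d (T d) x \<ge> 0" by (rule phi_d_nonneg[OF a hT[OF a]])
next
  fix d x :: real assume a: "admissible d" and x: "0 \<le> x"
  note h = hT[OF a]
  have dd: "0 < d" "d < 1/4" using a by (auto simp: admissible_def)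
  have c0: "0 \<le> d / (2 * (1 - d)) * x ^ 2" using dd by simp
  consider "x \<le> 2 * d" | "2 * d \<le> x" "x \<le> 1/d - 1" | "1/d - 1 \<le> x" by linarith
  then show "phi_d (T d) x \<le> phi x + d / (2 * (1 - d)) * x ^ 2 + 3"
  proof cases
    case 1
    then show ?thesis using phi_small_upper[OF a h x 1] phi_nonneg[OF x] c0 dd by linarith
  next
    case 2
    then show ?thesis using phi_eq[OF a h 2] c0 by linarith
  next
    case 3
    then show ?thesis using phi_large[OF a h 3] by linarith
  qed
next
  fix x :: real assume x: "0 \<le> x"
  show "((\<lambda>d. phi_d (T d) x) \<longlongrightarrow> phi x) (at_right 0)"
  proof (cases "x = 0")
    case True
    have lo: "\<forall>\<^sub>F d in at_right 0. 1 - 2 * d \<le> phi_d (T d) x"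
      using ev_adm
    proof eventually_elim
      case (elim d)
      then have a: "admissible d" by (auto intro: adm_intro)
      show ?case using phi_small_lower[OF a hT[OF a], of 0] True elim by simp
    qed
    have up: "\<forall>\<^sub>F d in at_right 0. phi_d (T d) x \<le> 1 + 2 * d"
      using ev_adm
    proof eventually_elim
      case (elim d)
      then have a: "admissible d" by (auto intro: adm_intro)
      show ?case using phi_small_upper[OF a hT[OF a], of 0] True elim by simp
    qed
    have l1: "((\<lambda>d. 1 - 2 * d) \<longlongrightarrow> (1::real)) (at_right 0)" by real_asymp
    have l2: "((\<lambda>d. 1 + 2 * d) \<longlongrightarrow> (1::real)) (at_right 0)" by real_asymp
    show ?thesis using tendsto_sandwich[OF lo up l1 l2] True by (simp add: phi_def)
  next
    case False
    then have xp: "x > 0" using x by simp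
    have ev: "\<forall>\<^sub>F d in at_right 0. 0 < d \<and> d < 1/4 \<and> 2 * d \<le> x \<and> x \<le> 1/d - 1"
      unfolding eventually_at_right_field
    proof (intro exI[of _ "min (1/4) (min (x/2) (1/(x+1)))"] conjI allI impI)
      show "0 < min (1/4) (min (x/2) (1/(x+1)))" using xp by simp
      fix y :: real assume y: "0 < y" "y < min (1/4) (min (x/2) (1/(x+1)))"
      show "0 < y" "y < 1/4" "2 * y \<le> x" using y by auto
      have "y * (x + 1) < 1" using y xp by (simp add: field_simps)
      then show "x \<le> 1/y - 1" using y by (simp add: field_simps)
    qed
    have "\<forall>\<^sub>F d in at_right 0. phi_d (T d) x = phi x"
      using ev
    proof eventually_elim
      case (elim d)
      then have a: "admissible d" by (auto intro: adm_intro)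
      show ?case using phi_eq[OF a hT[OF a]] elim by simp
    qed
    then show ?thesis by (rule tendsto_eventually)
  qed
next
  fix x :: real assume x: "x < 0"
  have "\<forall>\<^sub>F d in at_right 0. x * ln (2 * d) \<le> phi_d (T d) x"
    using ev_adm
  proof eventually_elim
    case (elim d)
    then have a: "admissible d" by (auto intro: adm_intro)
    have "x \<le> 2 * d" using x elim by simp
    then show ?case using phi_small_lower[OF a hT[OF a]] elim by fastforce
  qed
  then show "filterlim (\<lambda>d. phi_d (T d) x) at_top (at_right 0)"
    by (rule filterlim_at_top_mono[OF lim_neg[OF x]])
qed

end
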